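(* Let $G\in L_2(U,\mu)$, $w=\sum_\alpha w_\alpha\mathfrak{N}_\alpha$ with $w_\alpha\in\mathbb{R}$, and $f=\sum_\alpha f_\alpha(t,\upsilon)\mathfrak{N}_\alpha$ with $f_\alpha\in L_2(U,\mu)$ for each $\alpha$. Then the equation $$u(t)=w+\int_0^t\int_V[u(s)G(s,\upsilon)+f(s,\upsilon)]\diamond\mathfrak{N}(ds,d\upsilon),\quad 0\le t\le T,$$ has a unique solution $u(t)=\sum_\alpha u_\alpha(t)\mathfrak{N}_\alpha$ in the class of generalized processes whose coefficients $u_\alpha$ are continuous on $[0,T]$. Its coefficients are $u_0(t)=w_0$ and, for $|\alpha|\ge1$, $$u_\alpha(t)=w_\alpha+\sum_{k:\alpha_k\ge1}\int_0^t\int_V[u_{\alpha-\varepsilon_k}(r)G(r,\upsilon)+f_{\alpha-\varepsilon_k}(r,\upsilon)]m_k(r,\upsilon)\pi(d\upsilon)dr,\quad 0\le t\le T.$$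
   Context: Let $(V,\mathcal{V},\pi)$ be a $\sigma$-finite measure space, $U=[0,T]\times V$, $\mu=dt\otimes\pi$, $\{m_k\}$ a complete orthonormal system of $L_2(U,\mu)$; $\mathfrak{N}:L_2(U,\mu)\to L_2(\Omega,\mathbf{P})$ a mean-zero linear isometry, $\xi_k=\mathfrak{N}(m_k)$. $J$: finitely supported multi-indices of nonnegative integers, $\varepsilon_k$ unit multi-indices; $\{\mathfrak{N}_\alpha\}$ an orthogonal family with $\mathbf{E}\mathfrak{N}_\alpha^2=\alpha!$, $\mathfrak{N}_0=1$, obtained by degreewise orthogonalization of monomials in the $\xi_k$. Generalized random variables/processes are formal series $\sum_\alpha u_\alpha\mathfrak{N}_\alpha$ (with $u_\alpha$ numbers, resp. functions of $t$); equality means equality of all coefficients. For $h=\sum_\alpha h_\alpha(s,\upsilon)\mathfrak{N}_\alpha$ with $h_\alpha\in L_2(U,\mu)$, $\int_0^t\int_Vh\diamond\mathfrak{N}(ds,d\upsilon):=\delta(\chi_{[0,t]}h)=\sum_\alpha\sum_k\left(\int_0^t\int_Vh_\alpha m_k\,d\pi ds\right)\mathfrak{N}_{\alpha+\varepsilon_k}$; and $u(s)G(s,\upsilon):=\sum_\alpha u_\alpha(s)G(s,\upsilon)\mathfrak{N}_\alpha$. *)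

theory Defs
  imports "HOL-Analysis.Analysis" "HOL-Library.Poly_Mapping"
begin

type_synonym mindex = "nat \<Rightarrow>\<^sub>0 nat"

definition eps :: "nat \<Rightarrow> mindex" where
  "eps k = Poly_Mapping.single k 1"

(* mu = dt (x) pi on U = [0,T] x V, V = space pi *)
definition U_measure :: "real \<Rightarrow> 'v measure \<Rightarrow> (real \<times> 'v) measure" where
  "U_measure T \<pi> = restrict_space lborel {0..T} \<Otimes>\<^sub>M \<pi>"

(* L_2(M) as a set of (representatives of) square integrable real functions *)
definition L2 :: "'a measure \<Rightarrow> ('a \<Rightarrow> real) set" where
  "L2 M = {g. g \<in> borel_measurable M \<and> integrable M (\<lambda>x. (g x)\<^sup>2)}"

definition complete_ONS :: "'a measure \<Rightarrow> (nat \<Rightarrow> 'a \<Rightarrow> real) \<Rightarrow> bool" where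
  "complete_ONS M m \<longleftrightarrow>
     (\<forall>k. m k \<in> L2 M) \<and>
     (\<forall>j k. (\<integral>x. m j x * m k x \<partial>M) = (if j = k then 1 else 0)) \<and>
     (\<forall>g\<in>L2 M. (\<forall>k. (\<integral>x. g x * m k x \<partial>M) = 0) \<longrightarrow> (AE x in M. g x = 0))"

definition int_tV :: "real \<Rightarrow> 'v measure \<Rightarrow> real \<Rightarrow> (real \<times> 'v \<Rightarrow> real) \<Rightarrow> real" where
  "int_tV T \<pi> t h = set_lebesgue_integral (U_measure T \<pi>) ({0..t} \<times> space \<pi>) h"

(* Coefficient at N_beta of  int_0^t int_V h <> N(ds,dv)
   = sum_alpha sum_k (int_0^t int_V h_alpha m_k) N_(alpha+eps_k),
   where h = sum_alpha h_alpha N_alpha is given by its coefficient family.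
   The pairs (alpha,k) with alpha + eps_k = beta are exactly
   k with beta_k >= 1 and alpha = beta - eps_k. *)
definition diamond_int ::
  "real \<Rightarrow> 'v measure \<Rightarrow> (nat \<Rightarrow> real \<times> 'v \<Rightarrow> real)
     \<Rightarrow> (mindex \<Rightarrow> real \<times> 'v \<Rightarrow> real) \<Rightarrow> real \<Rightarrow> mindex \<Rightarrow> real" where
  "diamond_int T \<pi> m h t \<beta> =
     (\<Sum>k\<in>{k. Poly_Mapping.lookup \<beta> k \<ge> 1}. int_tV T \<pi> t (\<lambda>x. h (\<beta> - eps k) x * m k x))"

(* u solves u(t) = w + int_0^t int_V [u(s)G + f] <> N(ds,dv), 0<=t<=T,
   in the class of generalized processes with continuous coefficients;
   equality of generalized processes = equality of all coefficients. *)
definition is_solution ::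
  "real \<Rightarrow> 'v measure \<Rightarrow> (nat \<Rightarrow> real \<times> 'v \<Rightarrow> real) \<Rightarrow> (real \<times> 'v \<Rightarrow> real)
     \<Rightarrow> (mindex \<Rightarrow> real) \<Rightarrow> (mindex \<Rightarrow> real \<times> 'v \<Rightarrow> real) \<Rightarrow> (mindex \<Rightarrow> real \<Rightarrow> real) \<Rightarrow> bool" where
  "is_solution T \<pi> m G w f u \<longleftrightarrow>
     (\<forall>\<alpha>. continuous_on {0..T} (u \<alpha>)) \<and>
     (\<forall>t\<in>{0..T}. \<forall>\<beta>. u \<beta> t = w \<beta> +
        diamond_int T \<pi> m (\<lambda>\<alpha> x. u \<alpha> (fst x) * G x + f \<alpha> x) t \<beta>)"

end

theory Submission
  imports Defs
begin

lemma cont_int: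
  fixes h :: "real \<times> 'v \<Rightarrow> real"
  assumes sf: "sigma_finite_measure \<pi>" and T: "0 \<le> T"
    and hi: "integrable (U_measure T \<pi>) h"
  shows "continuous_on {0..T} (\<lambda>t. set_lebesgue_integral (U_measure T \<pi>) ({0..t} \<times> space \<pi>) h)"
proof -
  define N where "N = restrict_space lborel {0..T::real}"
  have sN: "sigma_finite_measure N" unfolding N_def
    by (rule sigma_finite_measure_restrict_space) (auto intro: lborel.sigma_finite_measure_axioms)
  interpret P: pair_sigma_finite N \<pi> using sN sf by (simp add: pair_sigma_finite_def)
  have UM: "U_measure T \<pi> = N \<Otimes>\<^sub>M \<pi>" unfolding U_measure_def N_def ..
  define g where "g r = (\<integral>v. h (r,v) \<partial>\<pi>)" for r
  have hi': "integrable (N \<Otimes>\<^sub>M \<pi>) h" using hi UM by simp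
  have gi: "integrable N g" unfolding g_def by (rule P.integrable_fst'[OF hi'])
  define g' where "g' r = indicator {0..T} r * g r" for r
  have gi': "integrable lborel g'"
    using gi unfolding N_def g'_def by (subst (asm) integrable_restrict_space) auto
  have sint: "set_integrable lborel {0..T} g'"
    unfolding set_integrable_def by (rule integrable_mult_indicator[OF _ gi']) simp
  have hk: "g' integrable_on {0..T}" by (rule set_borel_integral_eq_integral(1)[OF sint])
  have eq: "set_lebesgue_integral (U_measure T \<pi>) ({0..t} \<times> space \<pi>) h = integral {0..t} g'"
    if t: "t \<in> {0..T}" for t
  proof -
    have meas: "{0..t} \<times> space \<pi> \<in> sets (N \<Otimes>\<^sub>M \<pi>)"
    proof -
        have "{0..t} \<in> sets N" unfolding N_def using t
          by (subst sets_restrict_space_iff) auto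
        then show ?thesis by (intro pair_measureI) auto
      qed
    have ii: "integrable (N \<Otimes>\<^sub>M \<pi>) (\<lambda>x. indicator ({0..t} \<times> space \<pi>) x *\<^sub>R h x)"
      by (rule integrable_mult_indicator[OF meas hi'])
    have "set_lebesgue_integral (U_measure T \<pi>) ({0..t} \<times> space \<pi>) h
        = (\<integral>x. indicator ({0..t} \<times> space \<pi>) x *\<^sub>R h x \<partial>(N \<Otimes>\<^sub>M \<pi>))"
      unfolding set_lebesgue_integral_def UM ..
    also have "\<dots> = (\<integral>r. (\<integral>v. indicator ({0..t} \<times> space \<pi>) (r,v) *\<^sub>R h (r,v) \<partial>\<pi>) \<partial>N)"
      by (rule P.integral_fst'[OF ii, symmetric])
    also have "\<dots> = (\<integral>r. indicator {0..t} r * g r \<partial>N)"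
    proof (rule Bochner_Integration.integral_cong[OF refl])
      fix r assume "r \<in> space N"
      have "(\<integral>v. indicator ({0..t} \<times> space \<pi>) (r,v) *\<^sub>R h (r,v) \<partial>\<pi>) = (\<integral>v. indicator {0..t} r * h (r,v) \<partial>\<pi>)"
        by (rule Bochner_Integration.integral_cong) (auto simp: indicator_def)
      then show "(\<integral>v. indicator ({0..t} \<times> space \<pi>) (r,v) *\<^sub>R h (r,v) \<partial>\<pi>) = indicator {0..t} r * g r"
        by (simp add: g_def)
    qed
    also have "\<dots> = (\<integral>r. indicator {0..T} r *\<^sub>R (indicator {0..t} r * g r) \<partial>lborel)"
      unfolding N_def by (rule integral_restrict_space) simp
    also have "\<dots> = (\<integral>r. indicator {0..t} r *\<^sub>R g' r \<partial>lborel)"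
      using t by (intro Bochner_Integration.integral_cong) (auto simp: g'_def indicator_def)
    also have "\<dots> = integral {0..t} g'"
    proof -
      have "set_integrable lborel {0..t} g'"
        unfolding set_integrable_def by (rule integrable_mult_indicator[OF _ gi']) simp
      from set_borel_integral_eq_integral(2)[OF this] show ?thesis
        by (simp add: set_lebesgue_integral_def)
    qed
    finally show ?thesis .
  qed
  show ?thesis
    by (rule continuous_on_eq[OF indefinite_integral_continuous_1[OF hk]]) (simp add: eq)
qed

definition deg :: "mindex \<Rightarrow> nat" where "deg \<alpha> = sum (Poly_Mapping.lookup \<alpha>) (Poly_Mapping.keys \<alpha>)"

lemma deg_sum: "finite S \<Longrightarrow> Poly_Mapping.keys \<alpha> \<subseteq> S \<Longrightarrow> deg \<alpha> = sum (Poly_Mapping.lookup \<alpha>) S"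
  unfolding deg_def by (rule sum.mono_neutral_left) (auto simp: in_keys_iff)

lemma deg_less: assumes "1 \<le> Poly_Mapping.lookup \<alpha> k" shows "deg (\<alpha> - eps k) < deg \<alpha>"
proof -
  have kin: "k \<in> Poly_Mapping.keys \<alpha>" using assms by (simp add: in_keys_iff)
  have lk: "Poly_Mapping.lookup (\<alpha> - eps k) j = Poly_Mapping.lookup \<alpha> j - (if j = k then 1 else 0)" for j
    by (simp add: lookup_minus eps_def lookup_single)
  have sub: "Poly_Mapping.keys (\<alpha> - eps k) \<subseteq> Poly_Mapping.keys \<alpha>" by (auto simp: in_keys_iff lk)
  have "deg (\<alpha> - eps k) = sum (Poly_Mapping.lookup (\<alpha> - eps k)) (Poly_Mapping.keys \<alpha>)"
    by (rule deg_sum[OF finite_keys sub])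
  also have "\<dots> = Poly_Mapping.lookup (\<alpha> - eps k) k + sum (Poly_Mapping.lookup (\<alpha> - eps k)) (Poly_Mapping.keys \<alpha> - {k})"
    using kin by (simp add: sum.remove)
  also have "sum (Poly_Mapping.lookup (\<alpha> - eps k)) (Poly_Mapping.keys \<alpha> - {k}) = sum (Poly_Mapping.lookup \<alpha>) (Poly_Mapping.keys \<alpha> - {k})"
    by (rule sum.cong) (auto simp: lk)
  also have "Poly_Mapping.lookup (\<alpha> - eps k) k = Poly_Mapping.lookup \<alpha> k - 1" by (simp add: lk)
  also have "deg \<alpha> = Poly_Mapping.lookup \<alpha> k + sum (Poly_Mapping.lookup \<alpha>) (Poly_Mapping.keys \<alpha> - {k})"
    unfolding deg_def using kin by (simp add: sum.remove)
  ultimately show ?thesis using assms by linarith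
qed

function usol :: "real \<Rightarrow> 'v measure \<Rightarrow> (nat \<Rightarrow> real \<times> 'v \<Rightarrow> real) \<Rightarrow> (real \<times> 'v \<Rightarrow> real)
   \<Rightarrow> (mindex \<Rightarrow> real) \<Rightarrow> (mindex \<Rightarrow> real \<times> 'v \<Rightarrow> real) \<Rightarrow> mindex \<Rightarrow> real \<Rightarrow> real" where
  "usol T \<pi> m G w f \<alpha> t = w \<alpha> +
                (\<Sum>k\<in>{k. Poly_Mapping.lookup \<alpha> k \<ge> 1}.
                   set_lebesgue_integral (U_measure T \<pi>) ({0..t} \<times> space \<pi>)
                     (\<lambda>(r,v). (usol T \<pi> m G w f (\<alpha> - eps k) r * G (r,v) + f (\<alpha> - eps k) (r,v)) * m k (r,v)))"
  by pat_completeness auto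
termination
  by (relation "Wellfounded.measure (\<lambda>(T,\<pi>,m,G,w,f,\<alpha>,t). deg \<alpha>)") (auto intro: deg_less)

declare usol.simps[simp del]

lemma two_ab: fixes g d :: real shows "2 * \<bar>g\<bar> * \<bar>d\<bar> \<le> g\<^sup>2 + d\<^sup>2"
proof -
  have "0 \<le> (\<bar>g\<bar> - \<bar>d\<bar>)\<^sup>2" by simp
  then show ?thesis by (simp add: power2_eq_square algebra_simps)
qed

lemma pt_bound:
  fixes a g c d B :: real
  assumes "\<bar>a\<bar> \<le> B"
  shows "\<bar>(a * g + c) * d\<bar> \<le> B * (g\<^sup>2 + d\<^sup>2) / 2 + (c\<^sup>2 + d\<^sup>2) / 2"
proof -
  have B: "0 \<le> B" using assms by linarith
  have 1: "\<bar>g\<bar> * \<bar>d\<bar> \<le> (g\<^sup>2 + d\<^sup>2) / 2" using two_ab[of g d] by (simp add: field_simps)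
  have 2: "\<bar>c\<bar> * \<bar>d\<bar> \<le> (c\<^sup>2 + d\<^sup>2) / 2" using two_ab[of c d] by (simp add: field_simps)
  have "\<bar>(a * g + c) * d\<bar> = \<bar>a * g * d + c * d\<bar>" by (simp add: algebra_simps)
  also have "\<dots> \<le> \<bar>a\<bar> * (\<bar>g\<bar> * \<bar>d\<bar>) + \<bar>c\<bar> * \<bar>d\<bar>"
    by (metis abs_mult abs_triangle_ineq mult.assoc)
  also have "\<dots> \<le> B * (\<bar>g\<bar> * \<bar>d\<bar>) + \<bar>c\<bar> * \<bar>d\<bar>"
    using assms by (intro add_mono mult_right_mono) auto
  also have "\<dots> \<le> B * ((g\<^sup>2 + d\<^sup>2) / 2) + (c\<^sup>2 + d\<^sup>2) / 2"
    using 1 2 B by (intro add_mono mult_left_mono) auto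
  finally show ?thesis by simp
qed

lemma integ:
  fixes u :: "real \<Rightarrow> real"
  assumes cu: "continuous_on {0..T} u" and G: "G \<in> L2 (U_measure T \<pi>)"
    and f: "c \<in> L2 (U_measure T \<pi>)" and d: "d \<in> L2 (U_measure T \<pi>)"
  shows "integrable (U_measure T \<pi>) (\<lambda>(r,v). (u r * G (r,v) + c (r,v)) * d (r,v))"
proof -
  let ?M = "U_measure T \<pi>"
  have sp: "space ?M = {0..T} \<times> space \<pi>"
    by (simp add: U_measure_def space_pair_measure)
  obtain B where B: "\<And>r. r \<in> {0..T} \<Longrightarrow> \<bar>u r\<bar> \<le> B"
  proof -
    have "compact (u ` {0..T})" by (rule compact_continuous_image[OF cu]) simp
    then have "bounded (u ` {0..T})" by (rule compact_imp_bounded)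
    then obtain B where "\<forall>x\<in>u ` {0..T}. norm x \<le> B" by (auto simp: bounded_iff)
    then show ?thesis using that[of B] by auto
  qed
  have um: "u \<in> borel_measurable (restrict_space lborel {0..T})"
  proof -
    have "sets (restrict_space lborel {0..T}) = sets (restrict_space borel {0..T})"
      by (simp add: sets_restrict_space)
    then show ?thesis using borel_measurable_continuous_on_restrict[OF cu]
      using measurable_cong_sets by blast
  qed
  have uf: "(\<lambda>x. u (fst x)) \<in> borel_measurable ?M"
    unfolding U_measure_def by (rule measurable_compose[OF measurable_fst um])
  have Gm: "G \<in> borel_measurable ?M" and cm: "c \<in> borel_measurable ?M" and dm: "d \<in> borel_measurable ?M"
    using G f d by (auto simp: L2_def)
  have Gi: "integrable ?M (\<lambda>x. (G x)\<^sup>2)" and ci: "integrable ?M (\<lambda>x. (c x)\<^sup>2)" and di: "integrable ?M (\<lambda>x. (d x)\<^sup>2)"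
    using G f d by (auto simp: L2_def)
  have bi: "integrable ?M (\<lambda>x. B * ((G x)\<^sup>2 + (d x)\<^sup>2) / 2 + ((c x)\<^sup>2 + (d x)\<^sup>2) / 2)"
    using Gi ci di by auto
  have eq: "(\<lambda>(r,v). (u r * G (r,v) + c (r,v)) * d (r,v)) = (\<lambda>x. (u (fst x) * G x + c x) * d x)"
    by auto
  show ?thesis unfolding eq
  proof (rule Bochner_Integration.integrable_bound[OF bi])
    show "(\<lambda>x. (u (fst x) * G x + c x) * d x) \<in> borel_measurable ?M"
      using uf Gm cm dm by measurable
    show "AE x in ?M. norm ((u (fst x) * G x + c x) * d x) \<le>
          norm (B * ((G x)\<^sup>2 + (d x)\<^sup>2) / 2 + ((c x)\<^sup>2 + (d x)\<^sup>2) / 2)"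
    proof (rule AE_I2)
      fix x assume "x \<in> space ?M"
      then have "fst x \<in> {0..T}" using sp by auto
      then have "\<bar>u (fst x)\<bar> \<le> B" by (rule B)
      from pt_bound[OF this, of "G x" "c x" "d x"]
      show "norm ((u (fst x) * G x + c x) * d x) \<le>
          norm (B * ((G x)\<^sup>2 + (d x)\<^sup>2) / 2 + ((c x)\<^sup>2 + (d x)\<^sup>2) / 2)"
        by simp
    qed
  qed
qed


lemma lam_eq: "(\<lambda>(r,v). (a r * G (r,v) + c (r,v)) * d (r,v)) = (\<lambda>x. (a (fst x) * G x + c x) * d x)"
  by (simp add: fun_eq_iff split_beta)

theorem lemma2:
  fixes T :: real and \<pi> :: "'v measure"
    and m :: "nat \<Rightarrow> real \<times> 'v \<Rightarrow> real"
    and G :: "real \<times> 'v \<Rightarrow> real"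
    and w :: "mindex \<Rightarrow> real"
    and f :: "mindex \<Rightarrow> real \<times> 'v \<Rightarrow> real"
  assumes "0 < T"
    and "sigma_finite_measure \<pi>"
    and "complete_ONS (U_measure T \<pi>) m"
    and "G \<in> L2 (U_measure T \<pi>)"
    and "\<forall>\<alpha>. f \<alpha> \<in> L2 (U_measure T \<pi>)"
  shows "\<exists>u. is_solution T \<pi> m G w f u
           \<and> (\<forall>u'. is_solution T \<pi> m G w f u' \<longrightarrow> (\<forall>\<alpha>. \<forall>t\<in>{0..T}. u' \<alpha> t = u \<alpha> t))
           \<and> (\<forall>t\<in>{0..T}. u 0 t = w 0)
           \<and> (\<forall>\<alpha>. \<alpha> \<noteq> 0 \<longrightarrow> (\<forall>t\<in>{0..T}. u \<alpha> t = w \<alpha> +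
                (\<Sum>k\<in>{k. Poly_Mapping.lookup \<alpha> k \<ge> 1}.
                   set_lebesgue_integral (U_measure T \<pi>) ({0..t} \<times> space \<pi>)
                     (\<lambda>(r,v). (u (\<alpha> - eps k) r * G (r,v) + f (\<alpha> - eps k) (r,v)) * m k (r,v)))))"
proof -
  note T = assms(1) and sf = assms(2) and ons = assms(3) and GL = assms(4) and fL = assms(5)
  define u where "u = usol T \<pi> m G w f"
  have uf: "u \<alpha> t = w \<alpha> + (\<Sum>k\<in>{k. Poly_Mapping.lookup \<alpha> k \<ge> 1}.
                   set_lebesgue_integral (U_measure T \<pi>) ({0..t} \<times> space \<pi>)
                     (\<lambda>(r,v). (u (\<alpha> - eps k) r * G (r,v) + f (\<alpha> - eps k) (r,v)) * m k (r,v)))" for \<alpha> t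
    unfolding u_def by (rule usol.simps)
  have mL: "m k \<in> L2 (U_measure T \<pi>)" for k using ons by (simp add: complete_ONS_def)
  have cont: "continuous_on {0..T} (u \<alpha>)" for \<alpha>
  proof (induction "deg \<alpha>" arbitrary: \<alpha> rule: less_induct)
    case less
    have "continuous_on {0..T} (\<lambda>t. w \<alpha> + (\<Sum>k\<in>{k. Poly_Mapping.lookup \<alpha> k \<ge> 1}.
                   set_lebesgue_integral (U_measure T \<pi>) ({0..t} \<times> space \<pi>)
                     (\<lambda>(r,v). (u (\<alpha> - eps k) r * G (r,v) + f (\<alpha> - eps k) (r,v)) * m k (r,v))))"
    proof (intro continuous_on_add continuous_on_const continuous_on_sum)
      fix k assume "k \<in> {k. Poly_Mapping.lookup \<alpha> k \<ge> 1}"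
      then have "deg (\<alpha> - eps k) < deg \<alpha>" by (simp add: deg_less)
      then have c: "continuous_on {0..T} (u (\<alpha> - eps k))" by (rule less)
      show "continuous_on {0..T} (\<lambda>t. set_lebesgue_integral (U_measure T \<pi>) ({0..t} \<times> space \<pi>)
                     (\<lambda>(r,v). (u (\<alpha> - eps k) r * G (r,v) + f (\<alpha> - eps k) (r,v)) * m k (r,v)))"
        using cont_int[OF sf _ integ[OF c GL fL[rule_format] mL]] T by simp
    qed
    moreover have "u \<alpha> = (\<lambda>t. w \<alpha> + (\<Sum>k\<in>{k. Poly_Mapping.lookup \<alpha> k \<ge> 1}. set_lebesgue_integral (U_measure T \<pi>) ({0..t} \<times> space \<pi>) (\<lambda>(r,v). (u (\<alpha> - eps k) r * G (r,v) + f (\<alpha> - eps k) (r,v)) * m k (r,v))))" by (rule ext) (rule uf)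
    ultimately show ?case by simp
  qed
  have sol: "is_solution T \<pi> m G w f u"
    unfolding is_solution_def diamond_int_def int_tV_def
  proof (intro conjI ballI allI cont)
    fix t \<beta> show "u \<beta> t = w \<beta> + (\<Sum>k\<in>{k. 1 \<le> Poly_Mapping.lookup \<beta> k}.
        set_lebesgue_integral (U_measure T \<pi>) ({0..t} \<times> space \<pi>)
          (\<lambda>x. (u (\<beta> - eps k) (fst x) * G x + f (\<beta> - eps k) x) * m k x))"
      by (subst uf) (simp only: lam_eq)
  qed
  have uniq: "\<forall>\<alpha>. \<forall>t\<in>{0..T}. u' \<alpha> t = u \<alpha> t" if s: "is_solution T \<pi> m G w f u'" for u'
  proof (intro allI)
    fix \<alpha> show "\<forall>t\<in>{0..T}. u' \<alpha> t = u \<alpha> t"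
    proof (induction "deg \<alpha>" arbitrary: \<alpha> rule: less_induct)
      case less
      show ?case
      proof
        fix t assume t: "t \<in> {0..T}"
        have "u' \<alpha> t = w \<alpha> + (\<Sum>k\<in>{k. Poly_Mapping.lookup \<alpha> k \<ge> 1}.
                   set_lebesgue_integral (U_measure T \<pi>) ({0..t} \<times> space \<pi>)
                     (\<lambda>x. (u' (\<alpha> - eps k) (fst x) * G x + f (\<alpha> - eps k) x) * m k x))"
        proof -
          from s t have "u' \<alpha> t = w \<alpha> + diamond_int T \<pi> m (\<lambda>\<alpha> x. u' \<alpha> (fst x) * G x + f \<alpha> x) t \<alpha>"
            unfolding is_solution_def by blast
          then show ?thesis by (simp only: diamond_int_def int_tV_def)
        qed
        also have "\<dots> = w \<alpha> + (\<Sum>k\<in>{k. Poly_Mapping.lookup \<alpha> k \<ge> 1}.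
                   set_lebesgue_integral (U_measure T \<pi>) ({0..t} \<times> space \<pi>)
                     (\<lambda>x. (u (\<alpha> - eps k) (fst x) * G x + f (\<alpha> - eps k) x) * m k x))"
        proof (intro arg_cong2[where f="(+)"] refl sum.cong)
          fix k assume "k \<in> {k. Poly_Mapping.lookup \<alpha> k \<ge> 1}"
          then have "deg (\<alpha> - eps k) < deg \<alpha>" by (simp add: deg_less)
          then have IH: "\<forall>t\<in>{0..T}. u' (\<alpha> - eps k) t = u (\<alpha> - eps k) t" by (rule less)
          have sp: "space (U_measure T \<pi>) = {0..T} \<times> space \<pi>"
            by (simp add: U_measure_def space_pair_measure)
          show "set_lebesgue_integral (U_measure T \<pi>) ({0..t} \<times> space \<pi>)
                     (\<lambda>x. (u' (\<alpha> - eps k) (fst x) * G x + f (\<alpha> - eps k) x) * m k x) =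
                set_lebesgue_integral (U_measure T \<pi>) ({0..t} \<times> space \<pi>)
                     (\<lambda>x. (u (\<alpha> - eps k) (fst x) * G x + f (\<alpha> - eps k) x) * m k x)"
            unfolding set_lebesgue_integral_def
            by (rule Bochner_Integration.integral_cong[OF refl]) (use IH sp in auto)
        qed
        also have "\<dots> = u \<alpha> t" by (subst (2) uf) (simp only: lam_eq)
        finally show "u' \<alpha> t = u \<alpha> t" .
      qed
    qed
  qed
  have z: "\<forall>t\<in>{0..T}. u 0 t = w 0"
  proof
    fix t show "u 0 t = w 0" by (subst uf) simp
  qed
  show ?thesis
    by (rule exI[of _ u]) (intro conjI allI impI ballI sol uniq z uf)
qed

end
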